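(* For any path $\alpha:[0,1]\to\mathrm{Mult}_n(\mathbb{C})$ and any $\widetilde\alpha(0)\in\mathbb{C}^n$ with $\mathrm{Mult}(\widetilde\alpha(0))=\alpha(0)$, there exists a path $\widetilde\alpha:[0,1]\to\mathbb{C}^n$ starting at $\widetilde\alpha(0)$ with $\mathrm{Mult}\circ\widetilde\alpha=\alpha$, and this lifted path is unique when $\alpha$ has weakly increasing shape.
   Context: $\mathrm{Mult}_n(\mathbb{C})=\mathbb{C}^n/\mathrm{Sym}_n$ is the space of $n$-element multisets in $\mathbb{C}$ and $\mathrm{Mult}:\mathbb{C}^n\to\mathrm{Mult}_n(\mathbb{C})$ the quotient map. The shape of a multiset is the integer partition of $n$ formed by its multiplicities. Integer partitions of $n$ are ordered by $\lambda\le\mu$ iff $\mu$ is obtained from $\lambda$ by partitioning the parts of $\lambda$ into blocks and summing each block. A path $\alpha$ has weakly increasing shape if $s\le t$ implies $\mathrm{Shape}(\alpha(s))\le\mathrm{Shape}(\alpha(t))$. *)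

theory Defs
  imports "HOL-Analysis.Analysis" "HOL-Library.Multiset"
begin

text \<open>C^n is rendered as complex ^ 'n (n = CARD('n), arbitrary but fixed).
  Mult sends a tuple to the multiset of its entries.\<close>
definition Mult :: "complex ^ 'n::finite \<Rightarrow> complex multiset" where
  "Mult x = image_mset (\<lambda>i. x $ i) (mset_set (UNIV :: 'n set))"

text \<open>Quotient topology on Mult_n(C) = image of Mult (the multisets of size n).\<close>
definition mult_open :: "'n::finite itself \<Rightarrow> complex multiset set \<Rightarrow> bool" where
  "mult_open _ U \<longleftrightarrow> U \<subseteq> range (Mult :: complex ^ 'n \<Rightarrow> complex multiset)
      \<and> open {x :: complex ^ 'n. Mult x \<in> U}"

lemma istopology_mult_open: "istopology (mult_open TYPE('n::finite))"
proof -
  have 1: "open {x :: complex ^ 'n. Mult x \<in> S \<and> Mult x \<in> T}"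
    if "open {x :: complex ^ 'n. Mult x \<in> S}" "open {x :: complex ^ 'n. Mult x \<in> T}" for S T
    using open_Int[OF that] by (simp add: Collect_conj_eq)
  have 2: "open {x :: complex ^ 'n. \<exists>X\<in>K. Mult x \<in> X}"
    if "\<forall>X\<in>K. open {x :: complex ^ 'n. Mult x \<in> X}" for K
  proof -
    have "{x :: complex ^ 'n. \<exists>X\<in>K. Mult x \<in> X} = (\<Union>X\<in>K. {x. Mult x \<in> X})" by auto
    then show ?thesis using that by auto
  qed
  show ?thesis unfolding istopology_def mult_open_def
    using 1 2 by auto
qed

definition Mult_top :: "'n::finite itself \<Rightarrow> complex multiset topology" where
  "Mult_top N = topology (mult_open N)"

text \<open>Shape: the integer partition (multiset of positive parts) of multiplicities.\<close>
definition Shape :: "'a multiset \<Rightarrow> nat multiset" where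
  "Shape M = image_mset (count M) (mset_set (set_mset M))"

text \<open>lam \<le> mu: mu arises by grouping the parts of lam into (nonempty) blocks
  and summing each block.\<close>
definition partition_le :: "nat multiset \<Rightarrow> nat multiset \<Rightarrow> bool" where
  "partition_le lam mu \<longleftrightarrow> (\<exists>P :: nat multiset multiset.
      {#} \<notin># P \<and> sum_mset P = lam \<and> image_mset sum_mset P = mu)"

definition weakly_increasing_shape :: "(real \<Rightarrow> 'a multiset) \<Rightarrow> bool" where
  "weakly_increasing_shape \<alpha> \<longleftrightarrow>
     (\<forall>s t. 0 \<le> s \<longrightarrow> s \<le> t \<longrightarrow> t \<le> 1 \<longrightarrow> partition_le (Shape (\<alpha> s)) (Shape (\<alpha> t)))"

end

theory Submission
  imports Defs
begin

definition MI :: "'i set \<Rightarrow> ('i \<Rightarrow> complex) \<Rightarrow> complex multiset" where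
  "MI I x = image_mset x (mset_set I)"

definition mclose :: "real \<Rightarrow> complex multiset \<Rightarrow> complex multiset \<Rightarrow> bool" where
  "mclose e M N \<longleftrightarrow> (\<exists>P. image_mset fst P = M \<and> image_mset snd P = N \<and> (\<forall>p\<in>#P. dist (fst p) (snd p) < e))"

definition mcont :: "real set \<Rightarrow> (real \<Rightarrow> complex multiset) \<Rightarrow> bool" where
  "mcont S A \<longleftrightarrow> (\<forall>t\<in>S. \<forall>e>0. \<exists>d>0. \<forall>s\<in>S. \<bar>s - t\<bar> < d \<longrightarrow> mclose e (A t) (A s))"

definition lcont :: "'i set \<Rightarrow> real set \<Rightarrow> (real \<Rightarrow> 'i \<Rightarrow> complex) \<Rightarrow> bool" where
  "lcont I S b \<longleftrightarrow> (\<forall>t\<in>S. \<forall>e>0. \<exists>d>0. \<forall>s\<in>S. \<bar>s - t\<bar> < d \<longrightarrow> (\<forall>i\<in>I. dist (b s i) (b t i) < e))"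

definition islift :: "'i set \<Rightarrow> real set \<Rightarrow> (real \<Rightarrow> complex multiset) \<Rightarrow> (real \<Rightarrow> 'i \<Rightarrow> complex) \<Rightarrow> bool" where
  "islift I S A b \<longleftrightarrow> lcont I S b \<and> (\<forall>t\<in>S. MI I (b t) = A t)"

definition nz :: "complex multiset \<Rightarrow> bool" where
  "nz M \<longleftrightarrow> (\<exists>c d. c \<in># M \<and> d \<in># M \<and> c \<noteq> d)"

definition Tc :: "'i set \<Rightarrow> bool" where
  "Tc I \<longleftrightarrow> (\<forall>A a b y. a \<le> b \<longrightarrow> mcont {a..b} A \<longrightarrow> (\<forall>t\<in>{a..b}. size (A t) = card I)
     \<longrightarrow> MI I y = A a \<longrightarrow> (\<exists>\<beta>. islift I {a..b} A \<beta> \<and> (\<forall>i\<in>I. \<beta> a i = y i)))"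

lemma MI_insert: "finite I \<Longrightarrow> i \<notin> I \<Longrightarrow> MI (insert i I) u = add_mset (u i) (MI I u)"
  by (simp add: MI_def)

lemma MI_cong: "(\<And>i. i \<in> I \<Longrightarrow> u i = v i) \<Longrightarrow> MI I u = MI I v"
  unfolding MI_def by (cases "finite I") (auto intro: image_mset_cong)

lemma size_MI: "size (MI I u) = card I"
  by (simp add: MI_def)

lemma set_MI: "finite I \<Longrightarrow> set_mset (MI I u) = u ` I"
  by (simp add: MI_def)

lemma pair_lift:
  assumes "finite I"
  shows "image_mset fst P = MI I u \<Longrightarrow> \<exists>v. image_mset (\<lambda>i. (u i, v i)) (mset_set I) = P"
  using assms
proof (induction I arbitrary: P rule: finite_induct)
  case empty
  then show ?case by (simp add: MI_def)
next
  case (insert i I)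
  have "u i \<in># image_mset fst P" using insert by (simp add: MI_insert)
  then obtain p where p: "p \<in># P" "fst p = u i" by auto
  define P' where "P' = P - {#p#}"
  have PP: "P = add_mset p P'" using p P'_def by simp
  have "image_mset fst P' = MI I u" using insert(4) insert(1,2) PP p by (simp add: MI_insert)
  then obtain v where v: "image_mset (\<lambda>i. (u i, v i)) (mset_set I) = P'" using insert(3) by blast
  define v' where "v' = v(i := snd p)"
  have "image_mset (\<lambda>i. (u i, v' i)) (mset_set I) = P'"
    unfolding v[symmetric] v'_def
    by (rule image_mset_cong) (use insert(1,2) in auto)
  then have "image_mset (\<lambda>i. (u i, v' i)) (mset_set (insert i I)) = P"
    using insert(1,2) PP p by (simp add: v'_def) (metis prod.collapse)
  then show ?case by blast
qed

lemma mclose_lift: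
  assumes "finite I" "mclose e (MI I x) N"
  shows "\<exists>y. MI I y = N \<and> (\<forall>i\<in>I. dist (x i) (y i) < e)"
proof -
  obtain P where P: "image_mset fst P = MI I x" "image_mset snd P = N" "\<forall>p\<in>#P. dist (fst p) (snd p) < e"
    using assms(2) unfolding mclose_def by blast
  obtain v where v: "image_mset (\<lambda>i. (x i, v i)) (mset_set I) = P" using pair_lift[OF assms(1) P(1)] by blast
  have "MI I v = N" using P(2) v unfolding MI_def by (auto simp: multiset.map_comp o_def)
  moreover have "\<forall>i\<in>I. dist (x i) (v i) < e"
  proof
    fix i assume "i \<in> I"
    then have "(x i, v i) \<in># P" using v assms(1) by force
    then show "dist (x i) (v i) < e" using P(3) by force
  qed
  ultimately show ?thesis by blast
qed

lemma mclose_elem: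
  assumes "mclose e M N" "z \<in># M"
  shows "\<exists>w\<in>#N. dist z w < e"
proof -
  obtain P where P: "image_mset fst P = M" "image_mset snd P = N" "\<forall>p\<in>#P. dist (fst p) (snd p) < e"
    using assms(1) unfolding mclose_def by blast
  then obtain p where "p \<in># P" "fst p = z" using assms(2) by auto
  then show ?thesis using P by force
qed

lemma mclose_elem2:
  assumes "mclose e M N" "w \<in># N"
  shows "\<exists>z\<in>#M. dist z w < e"
proof -
  obtain P where P: "image_mset fst P = M" "image_mset snd P = N" "\<forall>p\<in>#P. dist (fst p) (snd p) < e"
    using assms(1) unfolding mclose_def by blast
  then obtain p where "p \<in># P" "snd p = w" using assms(2) by auto
  then show ?thesis using P by force
qed

lemma mclose_size: "mclose e M N \<Longrightarrow> size M = size N"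
  unfolding mclose_def by auto

lemma mclose_refl: "e > 0 \<Longrightarrow> mclose e M M"
  unfolding mclose_def
  by (rule exI[of _ "image_mset (\<lambda>z. (z,z)) M"]) (auto simp: multiset.map_comp o_def)

lemma mclose_mono: "mclose e M N \<Longrightarrow> e \<le> e' \<Longrightarrow> mclose e' M N"
  unfolding mclose_def by force

lemma mclose_filter:
  assumes "mclose e M N"
    and "\<And>z w. z \<in># M \<Longrightarrow> w \<in># N \<Longrightarrow> dist z w < e \<Longrightarrow> Q z \<longleftrightarrow> Q w"
  shows "mclose e (filter_mset Q M) (filter_mset Q N)"
proof -
  obtain P where P: "image_mset fst P = M" "image_mset snd P = N" "\<forall>p\<in>#P. dist (fst p) (snd p) < e"
    using assms(1) unfolding mclose_def by blast
  have eq: "filter_mset (\<lambda>p. Q (fst p)) P = filter_mset (\<lambda>p. Q (snd p)) P"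
  proof (rule filter_mset_cong)
    fix p assume "p \<in># P"
    then show "Q (fst p) = Q (snd p)" using P assms(2)[of "fst p" "snd p"] by force
  qed simp
  show ?thesis unfolding mclose_def
    apply (rule exI[of _ "filter_mset (\<lambda>p. Q (fst p)) P"])
    apply (intro conjI)
    subgoal using P by (simp add: image_mset_filter_mset_swap)
    subgoal using P by (simp only: eq image_mset_filter_mset_swap)
    subgoal using P by auto
    done
qed

lemma exists_lift:
  assumes "finite I" "size M = card I"
  shows "\<exists>x. MI I x = M"
  using assms
proof (induction I arbitrary: M rule: finite_induct)
  case empty
  then show ?case by (simp add: MI_def)
next
  case (insert i I)
  then have "size M = Suc (card I)" by simp
  then obtain z M' where M: "M = add_mset z M'" using size_eq_Suc_imp_eq_union by metis
  then have "size M' = card I" using insert by simp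
  then obtain x where x: "MI I x = M'" using insert by blast
  have "MI I (x(i := z)) = M'" using x insert(2) by (metis MI_cong fun_upd_other)
  then have "MI (insert i I) (x(i:=z)) = M" using insert(1,2) M by (simp add: MI_insert)
  then show ?case by blast
qed

lemma lcont_subset: "lcont I S b \<Longrightarrow> T \<subseteq> S \<Longrightarrow> lcont I T b"
  unfolding lcont_def by (meson subsetD)

lemma mcont_subset: "mcont S A \<Longrightarrow> T \<subseteq> S \<Longrightarrow> mcont T A"
  unfolding mcont_def by (meson subsetD)

lemma islift_subset: "islift I S A b \<Longrightarrow> T \<subseteq> S \<Longrightarrow> islift I T A b"
  unfolding islift_def using lcont_subset by blast

lemma lcont_cong: "lcont I S b \<Longrightarrow> (\<And>t i. t \<in> S \<Longrightarrow> i \<in> I \<Longrightarrow> b' t i = b t i) \<Longrightarrow> lcont I S b'"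
  unfolding lcont_def by simp

lemma islift_cong: "islift I S A b \<Longrightarrow> (\<And>t i. t \<in> S \<Longrightarrow> i \<in> I \<Longrightarrow> b' t i = b t i) \<Longrightarrow> islift I S A b'"
  unfolding islift_def using lcont_cong MI_cong by metis

lemma lcont_const: "lcont I S (\<lambda>t. y)"
  unfolding lcont_def by auto

lemma lcont_glue:
  assumes c1: "lcont I (S \<inter> {..m}) b1" and c2: "lcont I (S \<inter> {m..}) b2"
    and agree: "\<And>i. i \<in> I \<Longrightarrow> b1 m i = b2 m i"
  shows "lcont I S (\<lambda>t. if t \<le> m then b1 t else b2 t)"
  unfolding lcont_def
proof (intro ballI allI impI)
  fix t e assume t: "t \<in> S" and e: "(e::real) > 0"
  consider "t < m" | "t = m" | "t > m" by linarith
  then show "\<exists>d>0. \<forall>s\<in>S. \<bar>s - t\<bar> < d \<longrightarrow> (\<forall>i\<in>I. dist ((if s \<le> m then b1 s else b2 s) i) ((if t \<le> m then b1 t else b2 t) i) < e)"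
  proof cases
    case 1
    then obtain d where d: "d > 0" "\<forall>s\<in>S \<inter> {..m}. \<bar>s - t\<bar> < d \<longrightarrow> (\<forall>i\<in>I. dist (b1 s i) (b1 t i) < e)"
      using c1 t e unfolding lcont_def by force
    show ?thesis
      apply (rule exI[of _ "min d (m - t)"])
      using d 1 by auto
  next
    case 3
    then obtain d where d: "d > 0" "\<forall>s\<in>S \<inter> {m..}. \<bar>s - t\<bar> < d \<longrightarrow> (\<forall>i\<in>I. dist (b2 s i) (b2 t i) < e)"
      using c2 t e unfolding lcont_def by force
    show ?thesis
      apply (rule exI[of _ "min d (t - m)"])
      using d 3 by auto
  next
    case 2
    obtain d1 where d1: "d1 > 0" "\<forall>s\<in>S \<inter> {..m}. \<bar>s - t\<bar> < d1 \<longrightarrow> (\<forall>i\<in>I. dist (b1 s i) (b1 t i) < e)"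
      using c1 t e 2 unfolding lcont_def by force
    obtain d2 where d2: "d2 > 0" "\<forall>s\<in>S \<inter> {m..}. \<bar>s - t\<bar> < d2 \<longrightarrow> (\<forall>i\<in>I. dist (b2 s i) (b2 t i) < e)"
      using c2 t e 2 unfolding lcont_def by force
    show ?thesis
      apply (rule exI[of _ "min d1 d2"])
      using d1 d2 2 agree by auto
  qed
qed

lemma islift_glue:
  assumes "islift I (S \<inter> {..m}) A b1" "islift I (S \<inter> {m..}) A b2"
    and "\<And>i. i \<in> I \<Longrightarrow> b1 m i = b2 m i"
  shows "islift I S A (\<lambda>t. if t \<le> m then b1 t else b2 t)"
proof -
  have "lcont I S (\<lambda>t. if t \<le> m then b1 t else b2 t)"
    using assms unfolding islift_def by (intro lcont_glue) auto
  moreover have "\<forall>t\<in>S. MI I (if t \<le> m then b1 t else b2 t) = A t"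
    using assms unfolding islift_def by auto
  ultimately show ?thesis unfolding islift_def by simp
qed

lemma mcont_reflect: "mcont S A \<Longrightarrow> mcont (uminus ` S) (\<lambda>t. A (-t))"
  unfolding mcont_def
proof (intro ballI allI impI)
  fix t e assume H: "\<forall>t\<in>S. \<forall>e>0. \<exists>d>0. \<forall>s\<in>S. \<bar>s - t\<bar> < d \<longrightarrow> mclose e (A t) (A s)"
    and t: "t \<in> uminus ` S" and e: "(e::real) > 0"
  then obtain d where d: "d > 0" "\<forall>s\<in>S. \<bar>s - (-t)\<bar> < d \<longrightarrow> mclose e (A (-t)) (A s)" by force
  show "\<exists>d>0. \<forall>s\<in>uminus ` S. \<bar>s - t\<bar> < d \<longrightarrow> mclose e (A (- t)) (A (- s))"
    apply (rule exI[of _ d]) using d by auto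
qed

lemma lcont_reflect: "lcont I S b \<Longrightarrow> lcont I (uminus ` S) (\<lambda>t. b (-t))"
  unfolding lcont_def
proof (intro ballI allI impI)
  fix t e assume H: "\<forall>t\<in>S. \<forall>e>0. \<exists>d>0. \<forall>s\<in>S. \<bar>s - t\<bar> < d \<longrightarrow> (\<forall>i\<in>I. dist (b s i) (b t i) < e)"
    and t: "t \<in> uminus ` S" and e: "(e::real) > 0"
  then obtain d where d: "d > 0" "\<forall>s\<in>S. \<bar>s - (-t)\<bar> < d \<longrightarrow> (\<forall>i\<in>I. dist (b s i) (b (-t) i) < e)" by force
  show "\<exists>d>0. \<forall>s\<in>uminus ` S. \<bar>s - t\<bar> < d \<longrightarrow> (\<forall>i\<in>I. dist (b (-s) i) (b (-t) i) < e)"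
    apply (rule exI[of _ d]) using d by auto
qed

lemma islift_reflect: "islift I S A b \<Longrightarrow> islift I (uminus ` S) (\<lambda>t. A (-t)) (\<lambda>t. b (-t))"
  unfolding islift_def using lcont_reflect by auto

lemma nz_open:
  assumes "mcont S A" "t \<in> S" "nz (A t)"
  shows "\<exists>d>0. \<forall>s\<in>S. \<bar>s - t\<bar> < d \<longrightarrow> nz (A s)"
proof -
  obtain c d where cd: "c \<in># A t" "d \<in># A t" "c \<noteq> d" using assms(3) unfolding nz_def by blast
  define e where "e = dist c d / 2"
  have e: "e > 0" using cd unfolding e_def by simp
  obtain r where r: "r > 0" "\<forall>s\<in>S. \<bar>s - t\<bar> < r \<longrightarrow> mclose e (A t) (A s)"
    using assms(1,2) e unfolding mcont_def by blast
  show ?thesis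
  proof (rule exI[of _ r], intro conjI ballI impI)
    fix s assume "s \<in> S" "\<bar>s - t\<bar> < r"
    then have m: "mclose e (A t) (A s)" using r by blast
    obtain w1 where w1: "w1 \<in># A s" "dist c w1 < e" using mclose_elem[OF m cd(1)] by blast
    obtain w2 where w2: "w2 \<in># A s" "dist d w2 < e" using mclose_elem[OF m cd(2)] by blast
    have "w1 \<noteq> w2"
    proof
      assume "w1 = w2"
      then have "dist c d < 2 * e" using w1 w2 dist_triangle_less_add[of c w1 e d e] by (simp add: dist_commute)
      then show False unfolding e_def by simp
    qed
    then show "nz (A s)" using w1 w2 unfolding nz_def by blast
  qed (use r in auto)
qed

lemma lcont_at_Z:
  assumes "mcont S A" "t \<in> S" "\<not> nz (A t)" "\<forall>s\<in>S. MI I (b s) = A s" "finite I" "e > 0"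
  shows "\<exists>d>0. \<forall>s\<in>S. \<bar>s - t\<bar> < d \<longrightarrow> (\<forall>i\<in>I. dist (b s i) (b t i) < e)"
proof -
  obtain r where r: "r > 0" "\<forall>s\<in>S. \<bar>s - t\<bar> < r \<longrightarrow> mclose e (A t) (A s)"
    using assms(1,2,6) unfolding mcont_def by blast
  show ?thesis
  proof (rule exI[of _ r], intro conjI ballI impI)
    fix s i assume s: "s \<in> S" "\<bar>s - t\<bar> < r" and i: "i \<in> I"
    then have m: "mclose e (A t) (A s)" using r by blast
    have "b s i \<in># A s" using assms(4) s i assms(5) by (metis set_MI imageI)
    then obtain z where z: "z \<in># A t" "dist z (b s i) < e" using mclose_elem2[OF m] by blast
    have "b t i \<in># A t" using assms(2,4) i assms(5) by (metis set_MI imageI)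
    then have "z = b t i" using z assms(3) unfolding nz_def by blast
    then show "dist (b s i) (b t i) < e" using z by (simp add: dist_commute)
  qed (use r in auto)
qed

lemma const_lift:
  assumes "\<not> nz M" "size M = card I" "finite I"
  shows "MI I (\<lambda>i. SOME c. c \<in># M) = M"
proof (cases "M = {#}")
  case True
  then have "I = {}" using assms by simp
  then show ?thesis using True by (simp add: MI_def)
next
  case False
  then obtain c where c: "c \<in># M" by blast
  then have sc: "(SOME c. c \<in># M) = c" using assms(1) unfolding nz_def by (metis someI_ex)
  have "set_mset M \<subseteq> {c}" using c assms(1) unfolding nz_def by blast
  then have "M = replicate_mset (size M) c" by (rule set_mset_subset_singletonD)
  moreover have "MI I (\<lambda>i. c) = replicate_mset (card I) c"
    unfolding MI_def by (simp add: image_mset_const_eq)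
  ultimately show ?thesis using sc assms(2) by simp
qed

lemma MI_split: "finite I \<Longrightarrow> MI I u = MI {i\<in>I. P i} u + MI {i\<in>I. \<not> P i} u"
proof -
  assume f: "finite I"
  have "I = {i\<in>I. P i} \<union> {i\<in>I. \<not> P i}" by auto
  moreover have "mset_set ({i\<in>I. P i} \<union> {i\<in>I. \<not> P i}) = mset_set {i\<in>I. P i} + mset_set {i\<in>I. \<not> P i}"
    by (rule mset_set_Union) (use f in auto)
  ultimately have "mset_set I = mset_set {i\<in>I. P i} + mset_set {i\<in>I. \<not> P i}" by simp
  then show ?thesis unfolding MI_def by simp
qed

lemma MI_filter: "finite I \<Longrightarrow> MI {i\<in>I. Q (y i)} y = filter_mset Q (MI I y)"
  unfolding MI_def by (simp add: filter_mset_image_mset)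

lemma local_split:
  fixes I :: "'i set"
  assumes IH: "\<And>J::'i set. finite J \<Longrightarrow> card J < card I \<Longrightarrow> Tc J"
    and fin: "finite I" and mc: "mcont S A" and t0: "t0 \<in> S" and nzt: "nz (A t0)"
    and sz: "\<forall>t\<in>S. size (A t) = card I"
  shows "\<exists>d>0. \<forall>s s' y. s \<le> s' \<longrightarrow> {s..s'} \<subseteq> S \<longrightarrow> \<bar>s - t0\<bar> < d \<longrightarrow> \<bar>s' - t0\<bar> < d
           \<longrightarrow> MI I y = A s \<longrightarrow> (\<exists>\<beta>. islift I {s..s'} A \<beta> \<and> (\<forall>i\<in>I. \<beta> s i = y i))"
proof -
  obtain c d where cd: "c \<in># A t0" "d \<in># A t0" "c \<noteq> d" using nzt unfolding nz_def by blast
  define F where "F = (\<lambda>e. dist c e) ` (set_mset (A t0) - {c})"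
  define r where "r = Min F"
  have Ff: "finite F" "F \<noteq> {}" using cd unfolding F_def by auto
  have rpos: "r > 0" unfolding r_def using Ff by (subst Min_gr_iff) (auto simp: F_def)
  have rle: "r \<le> dist c e" if "e \<in># A t0" "e \<noteq> c" for e
    unfolding r_def using Ff that by (intro Min_le) (auto simp: F_def)
  obtain dl where dl: "dl > 0" "\<forall>s\<in>S. \<bar>s - t0\<bar> < dl \<longrightarrow> mclose (r/4) (A t0) (A s)"
  proof -
    have "r/4 > 0" using rpos by simp
    then show ?thesis using mc t0 that unfolding mcont_def by blast
  qed
  have sep: "dist z c < r/4 \<or> dist z c > 3*r/4" if H: "s \<in> S" "\<bar>s - t0\<bar> < dl" "z \<in># A s" for s z
  proof -
    have "mclose (r/4) (A t0) (A s)" using dl H(1,2) by blast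
    then obtain e where e: "e \<in># A t0" "dist e z < r/4" using mclose_elem2 H(3) by blast
    show ?thesis
    proof (cases "e = c")
      case True then show ?thesis using e by (simp add: dist_commute)
    next
      case False
      then have "r \<le> dist c e" using rle e by blast
      moreover have "dist c e \<le> dist c z + dist z e" by (rule dist_triangle)
      ultimately show ?thesis using e by (simp add: dist_commute)
    qed
  qed
  define Q where "Q = (\<lambda>z. dist z c < r/2)"
  have Qiff: "Q z \<longleftrightarrow> Q w" if "t \<in> S" "\<bar>t - t0\<bar> < dl" "u \<in> S" "\<bar>u - t0\<bar> < dl"
    "z \<in># A t" "w \<in># A u" "dist z w < r/4" for t u z w
  proof -
    have 1: "dist z c \<le> dist z w + dist w c" by (rule dist_triangle)
    have 2: "dist w c \<le> dist w z + dist z c" by (rule dist_triangle)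
    have 3: "dist w z = dist z w" by (simp add: dist_commute)
    show ?thesis using sep[OF that(1,2,5)] sep[OF that(3,4,6)] 1 2 3 that(7) unfolding Q_def by linarith
  qed
  have filt: "mclose e (filter_mset Q (A t)) (filter_mset Q (A u)) \<and>
      mclose e (filter_mset (\<lambda>z. \<not> Q z) (A t)) (filter_mset (\<lambda>z. \<not> Q z) (A u))"
    if "t \<in> S" "\<bar>t - t0\<bar> < dl" "u \<in> S" "\<bar>u - t0\<bar> < dl" "mclose e (A t) (A u)" "e \<le> r/4" for t u e
  proof -
    have H: "\<And>z w. z \<in># A t \<Longrightarrow> w \<in># A u \<Longrightarrow> dist z w < e \<Longrightarrow> Q z \<longleftrightarrow> Q w"
      using Qiff[OF that(1-4)] that(6) by force
    have H2: "\<And>z w. z \<in># A t \<Longrightarrow> w \<in># A u \<Longrightarrow> dist z w < e \<Longrightarrow> (\<not> Q z) \<longleftrightarrow> (\<not> Q w)"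
      using H by blast
    show ?thesis using mclose_filter[OF that(5) H] mclose_filter[OF that(5) H2] by (rule conjI)
  qed
  show ?thesis
  proof (rule exI[of _ dl], intro conjI allI impI)
    fix s s' y assume ss: "s \<le> s'" "{s..s'} \<subseteq> S" "\<bar>s - t0\<bar> < dl" "\<bar>s' - t0\<bar> < dl" and y: "MI I y = A s"
    define N where "N = {s..s'}"
    have Nin: "u \<in> S" "\<bar>u - t0\<bar> < dl" if "u \<in> N" for u using that ss unfolding N_def by auto
    define A1 where "A1 = (\<lambda>t. filter_mset Q (A t))"
    define A2 where "A2 = (\<lambda>t. filter_mset (\<lambda>z. \<not> Q z) (A t))"
    have mc12: "mcont N A1 \<and> mcont N A2"
      unfolding mcont_def
    proof (intro conjI ballI allI impI)
      fix t e assume t: "t \<in> N" and e: "(e::real) > 0"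
      have ep: "min e (r/4) > 0" using e rpos by simp
      obtain dd where dd: "dd > 0" "\<forall>u\<in>S. \<bar>u - t\<bar> < dd \<longrightarrow> mclose (min e (r/4)) (A t) (A u)"
        using mc Nin(1)[OF t] ep unfolding mcont_def by blast
      have *: "mclose e (A1 t) (A1 u) \<and> mclose e (A2 t) (A2 u)" if "u \<in> N" "\<bar>u - t\<bar> < dd" for u
      proof -
        have "mclose (min e (r/4)) (A t) (A u)" using dd that Nin(1) by blast
        then have "mclose (min e (r/4)) (A1 t) (A1 u) \<and> mclose (min e (r/4)) (A2 t) (A2 u)"
          using filt[OF Nin[OF t] Nin[OF that(1)]] unfolding A1_def A2_def by simp
        then show ?thesis using mclose_mono[of "min e (r/4)" _ _ e] by simp
      qed
      show "\<exists>d>0. \<forall>u\<in>N. \<bar>u - t\<bar> < d \<longrightarrow> mclose e (A1 t) (A1 u)" using * dd(1) by blast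
      show "\<exists>d>0. \<forall>u\<in>N. \<bar>u - t\<bar> < d \<longrightarrow> mclose e (A2 t) (A2 u)" using * dd(1) by blast
    qed
    have t0in: "t0 \<in> S" "\<bar>t0 - t0\<bar> < dl" using t0 dl by auto
    have szeq: "size (A1 t) = size (A1 t0) \<and> size (A2 t) = size (A2 t0)" if "t \<in> N" for t
    proof -
      have m: "mclose (r/4) (A t0) (A t)" using dl Nin[OF that] by blast
      have "mclose (r/4) (A1 t0) (A1 t) \<and> mclose (r/4) (A2 t0) (A2 t)"
        using filt[OF t0in Nin[OF that] m order_refl] unfolding A1_def A2_def by blast
      then show ?thesis using mclose_size by (metis (no_types))
    qed
    define J1 where "J1 = {i\<in>I. Q (y i)}"
    define J2 where "J2 = {i\<in>I. \<not> Q (y i)}"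
    have sN: "s \<in> N" using ss unfolding N_def by auto
    have MJ1: "MI J1 y = A1 s" unfolding J1_def A1_def using MI_filter[OF fin, of Q y] y by simp
    have MJ2: "MI J2 y = A2 s" unfolding J2_def A2_def using MI_filter[OF fin, of "\<lambda>z. \<not> Q z" y] y by simp
    have cardJ1: "card J1 = size (A1 s)" using arg_cong[OF MJ1, of size] by (simp add: size_MI)
    have cardJ2: "card J2 = size (A2 s)" using arg_cong[OF MJ2, of size] by (simp add: size_MI)
    have fJ: "finite J1" "finite J2" using fin unfolding J1_def J2_def by auto
    have "Q c" unfolding Q_def using rpos by simp
    then have "c \<in># A1 t0" using cd(1) unfolding A1_def by simp
    then have "A1 t0 \<noteq> {#}" by auto
    then have "size (A1 t0) \<noteq> 0" by simp
    then have "card J1 \<noteq> 0" using szeq[OF sN] cardJ1 by simp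
    then have J1ne: "J1 \<noteq> {}" by auto
    have "\<not> Q d" unfolding Q_def using rle[OF cd(2)] cd(3) rpos by (simp add: dist_commute)
    then have "d \<in># A2 t0" using cd(2) unfolding A2_def by simp
    then have "A2 t0 \<noteq> {#}" by auto
    then have "size (A2 t0) \<noteq> 0" by simp
    then have "card J2 \<noteq> 0" using szeq[OF sN] cardJ2 by simp
    then have J2ne: "J2 \<noteq> {}" by auto
    have cJ1: "card J1 < card I"
      using J2ne fin unfolding J1_def J2_def by (intro psubset_card_mono) auto
    have cJ2: "card J2 < card I"
      using J1ne fin unfolding J1_def J2_def by (intro psubset_card_mono) auto
    have sz1: "\<forall>t\<in>{s..s'}. size (A1 t) = card J1"
      using szeq sN cardJ1 unfolding N_def by simp
    have sz2: "\<forall>t\<in>{s..s'}. size (A2 t) = card J2"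
      using szeq sN cardJ2 unfolding N_def by simp
    obtain b1 where b1: "islift J1 {s..s'} A1 b1" "\<forall>i\<in>J1. b1 s i = y i"
      using IH[OF fJ(1) cJ1] ss(1) mc12 sz1 MJ1 unfolding Tc_def N_def by blast
    obtain b2 where b2: "islift J2 {s..s'} A2 b2" "\<forall>i\<in>J2. b2 s i = y i"
      using IH[OF fJ(2) cJ2] ss(1) mc12 sz2 MJ2 unfolding Tc_def N_def by blast
    define b where "b = (\<lambda>t i. if Q (y i) then b1 t i else b2 t i)"
    have "lcont I {s..s'} b"
      unfolding lcont_def
    proof (intro ballI allI impI)
      fix t e assume t: "t \<in> {s..s'}" and e: "(e::real) > 0"
      obtain d1 where d1: "d1 > 0" "\<forall>u\<in>{s..s'}. \<bar>u - t\<bar> < d1 \<longrightarrow> (\<forall>i\<in>J1. dist (b1 u i) (b1 t i) < e)"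
        using b1(1) t e unfolding islift_def lcont_def by blast
      obtain d2 where d2: "d2 > 0" "\<forall>u\<in>{s..s'}. \<bar>u - t\<bar> < d2 \<longrightarrow> (\<forall>i\<in>J2. dist (b2 u i) (b2 t i) < e)"
        using b2(1) t e unfolding islift_def lcont_def by blast
      show "\<exists>d>0. \<forall>u\<in>{s..s'}. \<bar>u - t\<bar> < d \<longrightarrow> (\<forall>i\<in>I. dist (b u i) (b t i) < e)"
        apply (rule exI[of _ "min d1 d2"])
        using d1 d2 unfolding b_def J1_def J2_def by auto
    qed
    moreover have "MI I (b t) = A t" if "t \<in> {s..s'}" for t
    proof -
      have "MI I (b t) = MI J1 (b t) + MI J2 (b t)" unfolding J1_def J2_def by (rule MI_split[OF fin])
      also have "MI J1 (b t) = MI J1 (b1 t)" by (rule MI_cong) (simp add: b_def J1_def)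
      also have "MI J2 (b t) = MI J2 (b2 t)" by (rule MI_cong) (simp add: b_def J2_def)
      also have "MI J1 (b1 t) = A1 t" using b1 that unfolding islift_def by blast
      also have "MI J2 (b2 t) = A2 t" using b2 that unfolding islift_def by blast
      finally show ?thesis unfolding A1_def A2_def by (simp add: multiset_partition[symmetric])
    qed
    moreover have "\<forall>i\<in>I. b s i = y i" using b1(2) b2(2) unfolding b_def J1_def J2_def by auto
    ultimately show "\<exists>\<beta>. islift I {s..s'} A \<beta> \<and> (\<forall>i\<in>I. \<beta> s i = y i)"
      unfolding islift_def by blast
  qed (use dl in auto)
qed

lemma noZ_closed:
  fixes I :: "'i set"
  assumes IH: "\<And>J::'i set. finite J \<Longrightarrow> card J < card I \<Longrightarrow> Tc J"
    and fin: "finite I" and uv: "u \<le> v" and mc: "mcont {u..v} A"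
    and sz: "\<forall>t\<in>{u..v}. size (A t) = card I" and nzs: "\<forall>t\<in>{u..v}. nz (A t)"
    and y: "MI I y = A u"
  shows "\<exists>\<beta>. islift I {u..v} A \<beta> \<and> (\<forall>i\<in>I. \<beta> u i = y i)"
proof -
  define G where "G = {w \<in> {u..v}. \<exists>\<beta>. islift I {u..w} A \<beta> \<and> (\<forall>i\<in>I. \<beta> u i = y i)}"
  have "islift I {u..u} A (\<lambda>t. y)" unfolding islift_def using y lcont_const by auto
  moreover have "u \<in> {u..v}" using uv by simp
  ultimately have uG: "u \<in> G" unfolding G_def by blast
  have bdd: "bdd_above G" unfolding G_def by (rule bdd_aboveI[of _ v]) auto
  define \<sigma> where "\<sigma> = Sup G"
  have su: "u \<le> \<sigma>" unfolding \<sigma>_def using uG bdd by (rule cSup_upper)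
  have Gne: "G \<noteq> {}" using uG by blast
  have sv: "\<sigma> \<le> v" unfolding \<sigma>_def using Gne by (rule cSup_least) (auto simp: G_def)
  have sS: "\<sigma> \<in> {u..v}" using su sv by simp
  obtain d where d: "d > 0" "\<forall>s s' y. s \<le> s' \<longrightarrow> {s..s'} \<subseteq> {u..v} \<longrightarrow> \<bar>s - \<sigma>\<bar> < d \<longrightarrow> \<bar>s' - \<sigma>\<bar> < d
           \<longrightarrow> MI I y = A s \<longrightarrow> (\<exists>\<beta>. islift I {s..s'} A \<beta> \<and> (\<forall>i\<in>I. \<beta> s i = y i))"
    using local_split[OF IH fin mc sS nzs[rule_format, OF sS] sz] by blast
  have "\<sigma> - d < Sup G" using d(1) unfolding \<sigma>_def by simp
  then obtain w where wG: "w \<in> G" and w: "\<sigma> - d < w" using less_cSup_iff[of G] uG bdd by blast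
  have ws: "w \<le> \<sigma>" unfolding \<sigma>_def using wG bdd by (rule cSup_upper)
  obtain \<beta> where \<beta>: "islift I {u..w} A \<beta>" "\<forall>i\<in>I. \<beta> u i = y i" and wuv: "w \<in> {u..v}"
    using wG unfolding G_def by blast
  define s' where "s' = min v (\<sigma> + d/2)"
  have ws': "w \<le> s'" using wuv ws d(1) unfolding s'_def by auto
  have "MI I (\<beta> w) = A w" using \<beta>(1) wuv unfolding islift_def by auto
  moreover have "{w..s'} \<subseteq> {u..v}" using wuv unfolding s'_def by auto
  moreover have "\<bar>w - \<sigma>\<bar> < d" "\<bar>s' - \<sigma>\<bar> < d" using w ws sv d(1) unfolding s'_def by auto
  ultimately obtain \<beta>' where \<beta>': "islift I {w..s'} A \<beta>'" "\<forall>i\<in>I. \<beta>' w i = \<beta> w i"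
    using d(2) ws' by blast
  have e1: "{u..s'} \<inter> {..w} = {u..w}" using ws' by auto
  have e2: "{u..s'} \<inter> {w..} = {w..s'}" using wuv by auto
  have gl: "islift I {u..s'} A (\<lambda>t. if t \<le> w then \<beta> t else \<beta>' t)"
    by (rule islift_glue) (use \<beta> \<beta>' e1 e2 in auto)
  have "s' \<in> G" unfolding G_def
    using gl \<beta>(2) wuv ws' su unfolding s'_def by (auto intro!: exI[of _ "\<lambda>t. if t \<le> w then \<beta> t else \<beta>' t"])
  then have "s' \<le> \<sigma>" unfolding \<sigma>_def using bdd by (rule cSup_upper)
  then have "s' = v" using d(1) unfolding s'_def by auto
  then show ?thesis using \<open>s' \<in> G\<close> unfolding G_def by auto
qed

lemma noZ_closed_back:
  fixes I :: "'i set"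
  assumes IH: "\<And>J::'i set. finite J \<Longrightarrow> card J < card I \<Longrightarrow> Tc J"
    and fin: "finite I" and uv: "u \<le> v" and mc: "mcont {u..v} A"
    and sz: "\<forall>t\<in>{u..v}. size (A t) = card I" and nzs: "\<forall>t\<in>{u..v}. nz (A t)"
    and y: "MI I y = A v"
  shows "\<exists>\<beta>. islift I {u..v} A \<beta> \<and> (\<forall>i\<in>I. \<beta> v i = y i)"
proof -
  have mc': "mcont {-v..-u} (\<lambda>t. A (-t))" using mcont_reflect[OF mc] by simp
  have "\<forall>t\<in>{-v..-u}. size (A (-t)) = card I" "\<forall>t\<in>{-v..-u}. nz (A (-t))" "MI I y = A (- (-v))"
    using sz nzs y by auto
  then obtain \<beta> where \<beta>: "islift I {-v..-u} (\<lambda>t. A (-t)) \<beta>" "\<forall>i\<in>I. \<beta> (-v) i = y i"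
    using noZ_closed[OF IH fin _ mc'] uv by force
  have "islift I {u..v} A (\<lambda>t. \<beta> (-t))" using islift_reflect[OF \<beta>(1)] by simp
  then show ?thesis using \<beta>(2) by auto
qed

lemma exhaust:
  fixes I :: "'i set"
  assumes mq: "m < q"
    and ext: "\<And>w w' \<gamma>. m \<le> w \<Longrightarrow> w \<le> w' \<Longrightarrow> w' < q \<Longrightarrow> islift I {m..w} A \<gamma> \<Longrightarrow>
        \<exists>\<gamma>'. islift I {m..w'} A \<gamma>' \<and> (\<forall>t\<in>{m..w}. \<forall>i\<in>I. \<gamma>' t i = \<gamma> t i)"
    and y: "MI I y = A m"
  shows "\<exists>\<beta>. islift I {m..<q} A \<beta> \<and> (\<forall>i\<in>I. \<beta> m i = y i)"
proof -
  define v where "v = (\<lambda>k::nat. q - (q - m) / (real k + 1))"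
  have v0: "v 0 = m" unfolding v_def by simp
  have vq: "v k < q" for k unfolding v_def using mq by simp
  have vmono: "v j \<le> v k" if "j \<le> k" for j k
  proof -
    have "(q - m) / (real k + 1) \<le> (q - m) / (real j + 1)"
      using that mq by (intro divide_left_mono) auto
    then show ?thesis unfolding v_def by simp
  qed
  have vm: "m \<le> v k" for k using vmono[of 0 k] v0 by simp
  define F where "F = rec_nat (\<lambda>t. y) (\<lambda>k \<gamma>. SOME \<gamma>'. islift I {m..v (Suc k)} A \<gamma>' \<and> (\<forall>t\<in>{m..v k}. \<forall>i\<in>I. \<gamma>' t i = \<gamma> t i))"
  have F0: "F 0 = (\<lambda>t. y)" unfolding F_def by simp
  have FS: "F (Suc k) = (SOME \<gamma>'. islift I {m..v (Suc k)} A \<gamma>' \<and> (\<forall>t\<in>{m..v k}. \<forall>i\<in>I. \<gamma>' t i = F k t i))" for k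
    unfolding F_def by simp
  have inv: "islift I {m..v k} A (F k) \<and> (\<forall>i\<in>I. F k m i = y i)" for k
  proof (induction k)
    case 0
    then show ?case unfolding F0 v0 islift_def using y lcont_const by auto
  next
    case (Suc k)
    have "\<exists>\<gamma>'. islift I {m..v (Suc k)} A \<gamma>' \<and> (\<forall>t\<in>{m..v k}. \<forall>i\<in>I. \<gamma>' t i = F k t i)"
      using ext[OF vm vmono[of k "Suc k"] vq] Suc by auto
    then have "islift I {m..v (Suc k)} A (F (Suc k)) \<and> (\<forall>t\<in>{m..v k}. \<forall>i\<in>I. F (Suc k) t i = F k t i)"
      unfolding FS by (rule someI_ex)
    then show ?case using Suc vm[of k] by auto
  qed
  have agreeS: "\<forall>t\<in>{m..v k}. \<forall>i\<in>I. F (Suc k) t i = F k t i" for k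
  proof -
    have "\<exists>\<gamma>'. islift I {m..v (Suc k)} A \<gamma>' \<and> (\<forall>t\<in>{m..v k}. \<forall>i\<in>I. \<gamma>' t i = F k t i)"
      using ext[OF vm vmono[of k "Suc k"] vq] inv by auto
    then have "islift I {m..v (Suc k)} A (F (Suc k)) \<and> (\<forall>t\<in>{m..v k}. \<forall>i\<in>I. F (Suc k) t i = F k t i)"
      unfolding FS by (rule someI_ex)
    then show ?thesis by blast
  qed
  have agree: "\<forall>t\<in>{m..v j}. \<forall>i\<in>I. F k t i = F j t i" if "j \<le> k" for j k
    using that
  proof (induction k rule: dec_induct)
    case base then show ?case by simp
  next
    case (step k)
    then show ?case using agreeS[of k] vmono[of j k] by fastforce
  qed
  have agree2: "\<forall>i\<in>I. F k t i = F j t i" if "m \<le> t" "t \<le> v j" "t \<le> v k" for j k t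
  proof (cases "j \<le> k")
    case True then show ?thesis using agree[OF True] that by auto
  next
    case False then show ?thesis using agree[of k j] that by auto
  qed
  have exk: "\<exists>k. t < v k" if "t < q" for t
  proof -
    obtain k :: nat where k: "(q - m) / (q - t) < real k" using reals_Archimedean2 by blast
    have "(q - m) / (real k + 1) < q - t"
      using k that mq by (simp add: field_simps)
    then show ?thesis unfolding v_def by (intro exI[of _ k]) simp
  qed
  define K where "K = (\<lambda>t. LEAST k. t < v k)"
  have K: "t < v (K t)" if "t < q" for t unfolding K_def using exk[OF that] by (rule LeastI_ex)
  define \<beta> where "\<beta> = (\<lambda>t. F (K t) t)"
  have lc: "lcont I {m..<q} \<beta>"
    unfolding lcont_def
  proof (intro ballI allI impI)
    fix t e assume t: "t \<in> {m..<q}" and e: "(e::real) > 0"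
    define k where "k = K t"
    have tk: "t < v k" using K t unfolding k_def by simp
    have tin: "t \<in> {m..v k}" using t tk by auto
    have "lcont I {m..v k} (F k)" using inv[of k] unfolding islift_def by blast
    then obtain d1 where d1: "d1 > 0" "\<forall>s\<in>{m..v k}. \<bar>s - t\<bar> < d1 \<longrightarrow> (\<forall>i\<in>I. dist (F k s i) (F k t i) < e)"
      using tin e unfolding lcont_def by blast
    show "\<exists>d>0. \<forall>s\<in>{m..<q}. \<bar>s - t\<bar> < d \<longrightarrow> (\<forall>i\<in>I. dist (\<beta> s i) (\<beta> t i) < e)"
    proof (rule exI[of _ "min d1 (v k - t)"], intro conjI ballI impI)
      fix s i assume s: "s \<in> {m..<q}" "\<bar>s - t\<bar> < min d1 (v k - t)" and i: "i \<in> I"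
      have sk: "s \<le> v k" using s by auto
      have "\<beta> s i = F k s i" unfolding \<beta>_def using agree2[of s "K s" k] K[of s] s sk i by auto
      moreover have "\<beta> t i = F k t i" unfolding \<beta>_def k_def by simp
      ultimately show "dist (\<beta> s i) (\<beta> t i) < e" using d1 s sk i by auto
    qed (use d1 tk in auto)
  qed
  have "MI I (\<beta> t) = A t" if "t \<in> {m..<q}" for t
    using inv[of "K t"] K[of t] that unfolding islift_def \<beta>_def by auto
  moreover have "\<forall>i\<in>I. \<beta> m i = y i"
    using inv[of "K m"] unfolding \<beta>_def by auto
  ultimately show ?thesis using lc unfolding islift_def by blast
qed

definition intv :: "real set \<Rightarrow> bool" where
  "intv C \<longleftrightarrow> (\<forall>x\<in>C. \<forall>z\<in>C. \<forall>y. x \<le> y \<and> y \<le> z \<longrightarrow> y \<in> C)"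

lemma noZ_half:
  fixes I :: "'i set"
  assumes IH: "\<And>J::'i set. finite J \<Longrightarrow> card J < card I \<Longrightarrow> Tc J"
    and fin: "finite I"
    and ivC: "intv C"
    and bd: "C \<subseteq> {a..b}" and mC: "m \<in> C" and mc: "mcont C A"
    and sz: "\<forall>t\<in>C. size (A t) = card I" and nzs: "\<forall>t\<in>C. nz (A t)"
    and y: "MI I y = A m"
  shows "\<exists>\<beta>. islift I (C \<inter> {m..}) A \<beta> \<and> (\<forall>i\<in>I. \<beta> m i = y i)"
proof -
  have iv: "\<And>x y z. x \<in> C \<Longrightarrow> z \<in> C \<Longrightarrow> x \<le> y \<Longrightarrow> y \<le> z \<Longrightarrow> y \<in> C"
    using ivC unfolding intv_def by blast
  define D where "D = C \<inter> {m..}"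
  define q where "q = Sup D"
  have mD: "m \<in> D" using mC unfolding D_def by simp
  have bdd: "bdd_above D" unfolding D_def using bd by (intro bdd_aboveI[of _ b]) auto
  have mq: "m \<le> q" unfolding q_def using mD bdd by (rule cSup_upper)
  have ub: "t \<le> q" if "t \<in> D" for t unfolding q_def using that bdd by (rule cSup_upper)
  show ?thesis
  proof (cases "q \<in> C")
    case True
    have DE: "D = {m..q}"
    proof
      show "D \<subseteq> {m..q}" using ub unfolding D_def by auto
      show "{m..q} \<subseteq> D" using iv[OF mC True] unfolding D_def by auto
    qed
    have sub: "{m..q} \<subseteq> C" using DE unfolding D_def by auto
    have sz2: "\<forall>t\<in>{m..q}. size (A t) = card I" using sz sub by blast
    have nz2: "\<forall>t\<in>{m..q}. nz (A t)" using nzs sub by blast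
    have "\<exists>\<beta>. islift I {m..q} A \<beta> \<and> (\<forall>i\<in>I. \<beta> m i = y i)"
      by (rule noZ_closed[OF IH fin mq mcont_subset[OF mc sub] sz2 nz2 y])
    then show ?thesis using DE unfolding D_def by simp
  next
    case False
    have DE: "D = {m..<q}"
    proof
      show "D \<subseteq> {m..<q}"
      proof
        fix t assume t: "t \<in> D"
        then have "t \<le> q" "t \<noteq> q" "m \<le> t" using ub False unfolding D_def by auto
        then show "t \<in> {m..<q}" by simp
      qed
      show "{m..<q} \<subseteq> D"
      proof
        fix t assume t: "t \<in> {m..<q}"
        then have "t < Sup D" unfolding q_def by simp
        then obtain x where x: "x \<in> D" "t < x" using less_cSup_iff[of D] mD bdd by blast
        have "x \<in> C" using x unfolding D_def by simp
        then have "t \<in> C" using iv[OF mC, of x t] t x(2) by simp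
        then show "t \<in> D" using t unfolding D_def by simp
      qed
    qed
    have "m \<noteq> q" using False mC by blast
    then have mq': "m < q" using mq by simp
    have ext: "\<exists>\<gamma>'. islift I {m..w'} A \<gamma>' \<and> (\<forall>t\<in>{m..w}. \<forall>i\<in>I. \<gamma>' t i = \<gamma> t i)"
      if w: "m \<le> w" "w \<le> w'" "w' < q" and \<gamma>: "islift I {m..w} A \<gamma>" for w w' \<gamma>
    proof -
      have sub: "{w..w'} \<subseteq> C"
      proof
        fix t assume "t \<in> {w..w'}"
        then have "t \<in> {m..<q}" using w by auto
        then show "t \<in> C" using DE unfolding D_def by blast
      qed
      have mw: "MI I (\<gamma> w) = A w" using \<gamma> w unfolding islift_def by auto
      have sz2: "\<forall>t\<in>{w..w'}. size (A t) = card I" using sz sub by blast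
      have nz2: "\<forall>t\<in>{w..w'}. nz (A t)" using nzs sub by blast
      obtain \<gamma>2 where \<gamma>2: "islift I {w..w'} A \<gamma>2" "\<forall>i\<in>I. \<gamma>2 w i = \<gamma> w i"
        using noZ_closed[OF IH fin w(2) mcont_subset[OF mc sub] sz2 nz2 mw] by blast
      have e1: "{m..w'} \<inter> {..w} = {m..w}" using w by auto
      have e2: "{m..w'} \<inter> {w..} = {w..w'}" using w by auto
      have g1: "islift I ({m..w'} \<inter> {..w}) A \<gamma>" unfolding e1 by (rule \<gamma>)
      have g2: "islift I ({m..w'} \<inter> {w..}) A \<gamma>2" unfolding e2 by (rule \<gamma>2(1))
      have gl: "islift I {m..w'} A (\<lambda>t. if t \<le> w then \<gamma> t else \<gamma>2 t)"
        by (rule islift_glue[OF g1 g2]) (use \<gamma>2(2) in simp)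
      have "\<forall>t\<in>{m..w}. \<forall>i\<in>I. (if t \<le> w then \<gamma> t else \<gamma>2 t) i = \<gamma> t i" by simp
      then show ?thesis using gl by blast
    qed
    obtain \<beta> where \<beta>: "islift I {m..<q} A \<beta>" "\<forall>i\<in>I. \<beta> m i = y i"
      using exhaust[of m q I A y, OF mq' ext y] by blast
    have CE: "C \<inter> {m..} = {m..<q}" using DE unfolding D_def .
    show ?thesis unfolding CE using \<beta> by blast
  qed
qed

lemma noZ_interval:
  fixes I :: "'i set"
  assumes IH: "\<And>J::'i set. finite J \<Longrightarrow> card J < card I \<Longrightarrow> Tc J"
    and fin: "finite I"
    and ivC: "intv C"
    and bd: "C \<subseteq> {a..b}" and mC: "m \<in> C" and mc: "mcont C A"
    and sz: "\<forall>t\<in>C. size (A t) = card I" and nzs: "\<forall>t\<in>C. nz (A t)"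
    and y: "MI I y = A m"
  shows "\<exists>\<beta>. islift I C A \<beta> \<and> (\<forall>i\<in>I. \<beta> m i = y i)"
proof -
  have iv: "\<And>x y z. x \<in> C \<Longrightarrow> z \<in> C \<Longrightarrow> x \<le> y \<Longrightarrow> y \<le> z \<Longrightarrow> y \<in> C"
    using ivC unfolding intv_def by blast
  obtain \<beta>1 where \<beta>1: "islift I (C \<inter> {m..}) A \<beta>1" "\<forall>i\<in>I. \<beta>1 m i = y i"
    using noZ_half[where C=C and m=m and A=A and y=y and a=a and b=b, OF IH fin ivC bd mC mc sz nzs y] by blast
  define C' where "C' = uminus ` C"
  have iv': "intv C'" unfolding intv_def
  proof (intro ballI allI impI)
    fix x y' z assume H: "x \<in> C'" "z \<in> C'" "x \<le> y' \<and> y' \<le> z"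
    obtain x0 where x0: "x0 \<in> C" "x = -x0" using H(1) unfolding C'_def by auto
    obtain z0 where z0: "z0 \<in> C" "z = -z0" using H(2) unfolding C'_def by auto
    have "-y' \<in> C" by (rule iv[OF z0(1) x0(1)]) (use x0 z0 H(3) in auto)
    then show "y' \<in> C'" unfolding C'_def by (metis image_eqI minus_minus)
  qed
  have bd': "C' \<subseteq> {-b..-a}" using bd unfolding C'_def by auto
  have mC': "-m \<in> C'" using mC unfolding C'_def by simp
  have mc': "mcont C' (\<lambda>t. A (-t))" using mcont_reflect[OF mc] unfolding C'_def .
  have sz': "\<forall>t\<in>C'. size (A (-t)) = card I" and nzs': "\<forall>t\<in>C'. nz (A (-t))" and y': "MI I y = A (- (-m))"
    using sz nzs y unfolding C'_def by auto
  obtain \<beta>2 where \<beta>2: "islift I (C' \<inter> {-m..}) (\<lambda>t. A (-t)) \<beta>2" "\<forall>i\<in>I. \<beta>2 (-m) i = y i"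
    using noZ_half[where C=C' and m="-m" and A="\<lambda>t. A (-t)" and y=y and a="-b" and b="-a", OF IH fin iv' bd' mC' mc' sz' nzs' y'] by blast
  have se: "uminus ` (C' \<inter> {-m..}) = C \<inter> {..m}"
    unfolding C'_def
  proof
    show "uminus ` (uminus ` C \<inter> {-m..}) \<subseteq> C \<inter> {..m}" by auto
    show "C \<inter> {..m} \<subseteq> uminus ` (uminus ` C \<inter> {-m..})"
    proof
      fix t assume t: "t \<in> C \<inter> {..m}"
      then have "-t \<in> uminus ` C \<inter> {-m..}" by auto
      then show "t \<in> uminus ` (uminus ` C \<inter> {-m..})" by (rule rev_image_eqI) simp
    qed
  qed
  have \<beta>2': "islift I (C \<inter> {..m}) A (\<lambda>t. \<beta>2 (-t))"
    using islift_reflect[OF \<beta>2(1)] se by simp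
  have gl: "islift I C A (\<lambda>t. if t \<le> m then \<beta>2 (-t) else \<beta>1 t)"
    by (rule islift_glue[OF \<beta>2' \<beta>1(1)]) (use \<beta>1(2) \<beta>2(2) in auto)
  show ?thesis using gl \<beta>2(2) by (intro exI[of _ "\<lambda>t. if t \<le> m then \<beta>2 (-t) else \<beta>1 t"]) auto
qed

lemma Tc_step:
  fixes I :: "'i set"
  assumes IH: "\<And>J::'i set. finite J \<Longrightarrow> card J < card I \<Longrightarrow> Tc J"
    and fin: "finite I"
  shows "Tc I"
  unfolding Tc_def
proof (intro allI impI)
  fix A a b y assume ab: "a \<le> b" and mc: "mcont {a..b} A" and sz: "\<forall>t\<in>{a..b}. size (A t) = card I"
    and y: "MI I y = A a"
  define comp where "comp = (\<lambda>t. {s \<in> {a..b}. \<forall>r. min s t \<le> r \<and> r \<le> max s t \<longrightarrow> nz (A r)})"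
  have comp_self: "t \<in> comp t" if "t \<in> {a..b}" "nz (A t)" for t
    using that unfolding comp_def by auto
  have comp_sub: "comp t \<subseteq> {a..b}" for t unfolding comp_def by auto
  have comp_nz: "\<forall>s\<in>comp t. nz (A s)" for t unfolding comp_def by auto
  have comp_intv: "intv (comp t)" for t
    unfolding intv_def
  proof (intro ballI allI impI)
    fix x z u assume x: "x \<in> comp t" and z: "z \<in> comp t" and u: "x \<le> u \<and> u \<le> z"
    have "u \<in> {a..b}" using x z u unfolding comp_def by auto
    moreover have "nz (A r)" if "min u t \<le> r" "r \<le> max u t" for r
    proof (cases "r \<le> t")
      case True
      then show ?thesis using x that u unfolding comp_def by (auto simp: min_def max_def split: if_splits)
    next
      case False
      then show ?thesis using z that u unfolding comp_def by (auto simp: min_def max_def split: if_splits)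
    qed
    ultimately show "u \<in> comp t" unfolding comp_def by auto
  qed
  have comp_eq: "comp s = comp t" if "s \<in> comp t" for s t
  proof
    show "comp s \<subseteq> comp t"
    proof
      fix x assume x: "x \<in> comp s"
      have "nz (A r)" if "min x t \<le> r" "r \<le> max x t" for r
      proof (cases "min x s \<le> r \<and> r \<le> max x s")
        case True then show ?thesis using x unfolding comp_def by auto
      next
        case False
        then have "min s t \<le> r \<and> r \<le> max s t" using that by (auto simp: min_def max_def split: if_splits)
        then show ?thesis using \<open>s \<in> comp t\<close> unfolding comp_def by auto
      qed
      then show "x \<in> comp t" using x unfolding comp_def by auto
    qed
    show "comp t \<subseteq> comp s"
    proof
      fix x assume x: "x \<in> comp t"
      have "nz (A r)" if "min x s \<le> r" "r \<le> max x s" for r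
      proof (cases "min x t \<le> r \<and> r \<le> max x t")
        case True then show ?thesis using x unfolding comp_def by auto
      next
        case False
        then have "min s t \<le> r \<and> r \<le> max s t" using that by (auto simp: min_def max_def split: if_splits)
        then show ?thesis using \<open>s \<in> comp t\<close> unfolding comp_def by auto
      qed
      then show "x \<in> comp s" using x unfolding comp_def by auto
    qed
  qed
  define L where "L = (\<lambda>C. SOME \<gamma>. islift I C A \<gamma> \<and> (a \<in> C \<longrightarrow> (\<forall>i\<in>I. \<gamma> a i = y i)))"
  have Lspec: "islift I (comp t) A (L (comp t)) \<and> (a \<in> comp t \<longrightarrow> (\<forall>i\<in>I. L (comp t) a i = y i))"
    if t: "t \<in> {a..b}" "nz (A t)" for t
  proof -
    have mcc: "mcont (comp t) A" using mcont_subset[OF mc comp_sub] .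
    have szc: "\<forall>s\<in>comp t. size (A s) = card I" using sz comp_sub by blast
    have ex: "\<exists>\<gamma>. islift I (comp t) A \<gamma> \<and> (a \<in> comp t \<longrightarrow> (\<forall>i\<in>I. \<gamma> a i = y i))"
    proof (cases "a \<in> comp t")
      case True
      then obtain \<gamma> where "islift I (comp t) A \<gamma>" "\<forall>i\<in>I. \<gamma> a i = y i"
        using noZ_interval[OF IH fin comp_intv comp_sub True mcc szc comp_nz y] by blast
      then show ?thesis by blast
    next
      case False
      obtain x where x: "MI I x = A t" using exists_lift[OF fin] sz t by metis
      obtain \<gamma> where "islift I (comp t) A \<gamma>"
        using noZ_interval[OF IH fin comp_intv comp_sub comp_self[OF t] mcc szc comp_nz x] by blast
      then show ?thesis using False by blast
    qed
    show ?thesis unfolding L_def by (rule someI_ex[OF ex])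
  qed
  define \<beta> where "\<beta> = (\<lambda>t. if nz (A t) then L (comp t) t else (\<lambda>i. SOME c. c \<in># A t))"
  have MIb: "\<forall>t\<in>{a..b}. MI I (\<beta> t) = A t"
  proof
    fix t assume t: "t \<in> {a..b}"
    show "MI I (\<beta> t) = A t"
    proof (cases "nz (A t)")
      case True
      then show ?thesis using Lspec[OF t True] comp_self[OF t True] unfolding \<beta>_def islift_def by auto
    next
      case False
      then show ?thesis unfolding \<beta>_def using const_lift[OF False _ fin] sz t by simp
    qed
  qed
  have lc: "lcont I {a..b} \<beta>"
    unfolding lcont_def
  proof (intro ballI allI impI)
    fix t e assume t: "t \<in> {a..b}" and e: "(e::real) > 0"
    show "\<exists>d>0. \<forall>s\<in>{a..b}. \<bar>s - t\<bar> < d \<longrightarrow> (\<forall>i\<in>I. dist (\<beta> s i) (\<beta> t i) < e)"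
    proof (cases "nz (A t)")
      case False
      show ?thesis by (rule lcont_at_Z[OF mc t False MIb fin e])
    next
      case True
      obtain d0 where d0: "d0 > 0" "\<forall>s\<in>{a..b}. \<bar>s - t\<bar> < d0 \<longrightarrow> nz (A s)"
        using nz_open[OF mc t True] by blast
      have tc: "t \<in> comp t" using comp_self[OF t True] .
      have "lcont I (comp t) (L (comp t))" using Lspec[OF t True] unfolding islift_def by blast
      then obtain d1 where d1: "d1 > 0" "\<forall>s\<in>comp t. \<bar>s - t\<bar> < d1 \<longrightarrow> (\<forall>i\<in>I. dist (L (comp t) s i) (L (comp t) t i) < e)"
        using tc e unfolding lcont_def by blast
      show ?thesis
      proof (rule exI[of _ "min d0 d1"], intro conjI ballI impI)
        fix s i assume s: "s \<in> {a..b}" "\<bar>s - t\<bar> < min d0 d1" and i: "i \<in> I"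
        have "nz (A r)" if "min s t \<le> r" "r \<le> max s t" for r
        proof -
          have "r \<in> {a..b}" using that s t by (auto simp: min_def max_def split: if_splits)
          moreover have "\<bar>r - t\<bar> < d0" using that s by (auto simp: min_def max_def split: if_splits)
          ultimately show ?thesis using d0 by blast
        qed
        then have sc: "s \<in> comp t" using s(1) unfolding comp_def by auto
        have nzs: "nz (A s)" using comp_nz sc by blast
        have "\<beta> s = L (comp t) s" unfolding \<beta>_def using nzs comp_eq[OF sc] by simp
        moreover have "\<beta> t = L (comp t) t" unfolding \<beta>_def using True by simp
        ultimately show "dist (\<beta> s i) (\<beta> t i) < e" using d1 sc s i by auto
      qed (use d0 d1 in auto)
    qed
  qed
  have at: "a \<in> {a..b}" using ab by simp
  have ba: "\<forall>i\<in>I. \<beta> a i = y i"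
  proof (cases "nz (A a)")
    case True
    then show ?thesis using Lspec[OF at True] comp_self[OF at True] unfolding \<beta>_def by auto
  next
    case False
    show ?thesis
    proof
      fix i assume i: "i \<in> I"
      have yi: "y i \<in># A a" using y i fin by (metis set_MI imageI)
      then have "\<exists>c. c \<in># A a" by blast
      then have "(SOME c. c \<in># A a) \<in># A a" by (rule someI_ex)
      then have "(SOME c. c \<in># A a) = y i" using yi False unfolding nz_def by blast
      then show "\<beta> a i = y i" unfolding \<beta>_def using False by simp
    qed
  qed
  show "\<exists>\<beta>. islift I {a..b} A \<beta> \<and> (\<forall>i\<in>I. \<beta> a i = y i)"
    using lc MIb ba unfolding islift_def by blast
qed

lemma Tc_all: "finite (I::'i set) \<Longrightarrow> Tc I"
proof (induction "card I" arbitrary: I rule: less_induct)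
  case less
  show ?case by (rule Tc_step[OF _ less.prems]) (use less.hyps in auto)
qed

lemma Mult_MI: "Mult x = MI UNIV (\<lambda>i. x $ i)"
  unfolding Mult_def MI_def by simp

lemma openin_Mult_top: "openin (Mult_top TYPE('n::finite)) = mult_open TYPE('n)"
  unfolding Mult_top_def by (rule topology_inverse'[OF istopology_mult_open])

lemma open_mclose_pre:
  fixes x :: "complex ^ 'n"
  assumes e: "e > 0"
  shows "open {w :: complex ^ 'n. mclose e (Mult x) (Mult w)}"
  unfolding open_dist
proof (intro ballI)
  fix w0 :: "complex ^ 'n" assume "w0 \<in> {w. mclose e (Mult x) (Mult w)}"
  then obtain P where P: "image_mset fst P = Mult x" "image_mset snd P = Mult w0" "\<forall>p\<in>#P. dist (fst p) (snd p) < e"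
    unfolding mclose_def by blast
  define P' where "P' = image_mset prod.swap P"
  have "image_mset fst P' = MI UNIV (\<lambda>i. w0 $ i)" using P(2) unfolding P'_def Mult_MI by (simp add: multiset.map_comp o_def)
  then obtain v where v: "image_mset (\<lambda>i. (w0 $ i, v i)) (mset_set UNIV) = P'" using pair_lift[OF finite_class.finite_UNIV] by blast
  have dv: "dist (v i) (w0 $ i) < e" for i
  proof -
    have "(w0 $ i, v i) \<in># P'" unfolding v[symmetric] by simp
    then obtain p where "p \<in># P" "prod.swap p = (w0 $ i, v i)" unfolding P'_def by auto
    then show ?thesis using P(3) by (cases p) auto
  qed
  have Mv: "MI UNIV v = Mult x"
  proof -
    have "MI UNIV v = image_mset snd P'" unfolding v[symmetric] MI_def by (simp add: multiset.map_comp o_def)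
    also have "\<dots> = image_mset fst P" unfolding P'_def by (simp add: multiset.map_comp o_def)
    finally show ?thesis using P(1) by simp
  qed
  define \<eta> where "\<eta> = Min (range (\<lambda>i. e - dist (v i) (w0 $ i)))"
  have \<eta>pos: "\<eta> > 0" unfolding \<eta>_def using dv by (subst Min_gr_iff) auto
  have \<eta>le: "\<eta> \<le> e - dist (v i) (w0 $ i)" for i unfolding \<eta>_def by (rule Min_le) auto
  show "\<exists>d>0. \<forall>w. dist w w0 < d \<longrightarrow> w \<in> {w. mclose e (Mult x) (Mult w)}"
  proof (rule exI[of _ \<eta>], intro conjI allI impI)
    fix w :: "complex ^ 'n" assume w: "dist w w0 < \<eta>"
    define Q where "Q = image_mset (\<lambda>i. (v i, w $ i)) (mset_set (UNIV :: 'n set))"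
    have "image_mset fst Q = Mult x" using Mv unfolding Q_def MI_def by (simp add: multiset.map_comp o_def)
    moreover have "image_mset snd Q = Mult w" unfolding Q_def Mult_def by (simp add: multiset.map_comp o_def)
    moreover have "\<forall>p\<in>#Q. dist (fst p) (snd p) < e"
    proof
      fix p assume "p \<in># Q"
      then obtain i where p: "p = (v i, w $ i)" unfolding Q_def by auto
      have "dist (v i) (w $ i) \<le> dist (v i) (w0 $ i) + dist (w0 $ i) (w $ i)" by (rule dist_triangle)
      moreover have "dist (w0 $ i) (w $ i) \<le> dist w0 w" by (rule dist_vec_nth_le)
      ultimately show "dist (fst p) (snd p) < e" using p w \<eta>le[of i] by (simp add: dist_commute)
    qed
    ultimately show "w \<in> {w. mclose e (Mult x) (Mult w)}" unfolding mclose_def by blast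
  qed (use \<eta>pos in auto)
qed

lemma exist_part:
  fixes \<alpha> :: "real \<Rightarrow> complex multiset" and x0 :: "complex ^ 'n"
  assumes cont: "continuous_map (top_of_set {0..1}) (Mult_top TYPE('n)) \<alpha>"
    and x0: "Mult x0 = \<alpha> 0"
  shows "\<exists>\<beta> :: real \<Rightarrow> complex ^ 'n. path \<beta> \<and> \<beta> 0 = x0 \<and> (\<forall>t\<in>{0..1}. Mult (\<beta> t) = \<alpha> t)"
proof -
  have rng: "\<alpha> t \<in> range (Mult :: complex ^ 'n \<Rightarrow> _)" if "t \<in> {0..1}" for t
  proof -
    have "\<alpha> t \<in> topspace (Mult_top TYPE('n))"
      using continuous_map_image_subset_topspace[OF cont] that by auto
    then obtain U where "openin (Mult_top TYPE('n)) U" "\<alpha> t \<in> U" unfolding topspace_def by blast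
    then show ?thesis unfolding openin_Mult_top mult_open_def by blast
  qed
  have mc: "mcont {0..1} \<alpha>"
    unfolding mcont_def
  proof (intro ballI allI impI)
    fix t :: real and e :: real assume t: "t \<in> {0..1}" and e: "e > 0"
    obtain x :: "complex ^ 'n" where x: "\<alpha> t = Mult x" using rng[OF t] by blast
    define U where "U = {M \<in> range (Mult :: complex ^ 'n \<Rightarrow> _). mclose e (Mult x) M}"
    have pre: "{w :: complex ^ 'n. Mult w \<in> U} = {w. mclose e (Mult x) (Mult w)}" unfolding U_def by auto
    have "openin (Mult_top TYPE('n)) U"
      unfolding openin_Mult_top mult_open_def pre using open_mclose_pre[OF e] unfolding U_def by auto
    then have "openin (top_of_set {0..1}) {s \<in> topspace (top_of_set {0..1}). \<alpha> s \<in> U}"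
      using cont unfolding continuous_map_def by blast
    then have op: "openin (top_of_set {0..1}) {s \<in> {0..1}. \<alpha> s \<in> U}" by simp
    have "t \<in> {s \<in> {0..1}. \<alpha> s \<in> U}" using t x mclose_refl[OF e] unfolding U_def by auto
    then obtain d where d: "d > 0" "\<forall>s\<in>{0..1}. dist s t < d \<longrightarrow> s \<in> {s \<in> {0..1}. \<alpha> s \<in> U}"
      using op unfolding openin_euclidean_subtopology_iff by blast
    show "\<exists>d>0. \<forall>s\<in>{0..1}. \<bar>s - t\<bar> < d \<longrightarrow> mclose e (\<alpha> t) (\<alpha> s)"
      using d x unfolding U_def dist_real_def by auto
  qed
  have sz: "\<forall>t\<in>{0..1}. size (\<alpha> t) = card (UNIV :: 'n set)"
  proof
    fix t :: real assume "t \<in> {0..1}"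
    then obtain x :: "complex ^ 'n" where "\<alpha> t = Mult x" using rng by blast
    then show "size (\<alpha> t) = card (UNIV :: 'n set)" unfolding Mult_def by simp
  qed
  have y: "MI UNIV (\<lambda>i. x0 $ i) = \<alpha> 0" using x0 Mult_MI by metis
  obtain \<beta> where \<beta>: "islift (UNIV :: 'n set) {0..1} \<alpha> \<beta>" "\<forall>i\<in>UNIV. \<beta> 0 i = x0 $ i"
  proof -
    have T: "Tc (UNIV :: 'n set)" by (rule Tc_all) simp
    have z1: "(0::real) \<le> 1" by simp
    have "\<exists>\<beta>. islift (UNIV :: 'n set) {0..1} \<alpha> \<beta> \<and> (\<forall>i\<in>UNIV. \<beta> 0 i = x0 $ i)"
      by (rule T[unfolded Tc_def, rule_format, OF z1 mc _ y]) (use sz in blast)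
    then show ?thesis using that by blast
  qed
  define \<beta>' where "\<beta>' = (\<lambda>t. \<chi> i. \<beta> t i)"
  have "continuous_on {0..1} (\<lambda>t. \<beta> t i)" for i
    unfolding continuous_on_iff
  proof (intro ballI allI impI)
    fix t :: real and e :: real assume t: "t \<in> {0..1}" and e: "e > 0"
    obtain d where d: "d > 0" "\<forall>s\<in>{0..1}. \<bar>s - t\<bar> < d \<longrightarrow> (\<forall>i\<in>UNIV. dist (\<beta> s i) (\<beta> t i) < e)"
      using \<beta>(1) t e unfolding islift_def lcont_def by blast
    show "\<exists>d>0. \<forall>s\<in>{0..1}. dist s t < d \<longrightarrow> dist (\<beta> s i) (\<beta> t i) < e"
      using d unfolding dist_real_def by blast
  qed
  then have "path \<beta>'" unfolding path_def \<beta>'_def by (intro continuous_on_vec_lambda)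
  moreover have "\<beta>' 0 = x0" unfolding \<beta>'_def using \<beta>(2) by (simp add: vec_eq_iff)
  moreover have "\<forall>t\<in>{0..1}. Mult (\<beta>' t) = \<alpha> t"
  proof -
    have "Mult (\<beta>' t) = MI UNIV (\<beta> t)" for t unfolding Mult_MI \<beta>'_def by (rule MI_cong) simp
    then show ?thesis using \<beta>(1) unfolding islift_def by simp
  qed
  ultimately show ?thesis by blast
qed

lemma size_le_sum_mset: "{#} \<notin># P \<Longrightarrow> size P \<le> size (sum_mset (P :: 'a multiset multiset))"
proof (induction P)
  case empty then show ?case by simp
next
  case (add X P)
  then have "X \<noteq> {#}" "size P \<le> size (sum_mset P)" by auto
  then show ?case by (simp add: Suc_leI nonempty_has_size)
qed

lemma size_Shape: "size (Shape M) = card (set_mset M)"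
  unfolding Shape_def by simp

lemma shape_card:
  assumes "partition_le (Shape M) (Shape N)"
  shows "card (set_mset N) \<le> card (set_mset M)"
proof -
  obtain P :: "nat multiset multiset" where P: "{#} \<notin># P" "sum_mset P = Shape M" "image_mset sum_mset P = Shape N"
    using assms unfolding partition_le_def by blast
  have "card (set_mset N) = size P" using P(3) size_Shape by (metis size_image_mset)
  also have "\<dots> \<le> size (sum_mset P)" using P(1) by (rule size_le_sum_mset)
  also have "\<dots> = card (set_mset M)" using P(2) size_Shape by simp
  finally show ?thesis .
qed

lemma set_Mult: "set_mset (Mult x) = range (\<lambda>i. x $ i)"
  unfolding Mult_def by simp

lemma loc_uniq:
  fixes \<beta>1 \<beta>2 :: "real \<Rightarrow> complex ^ 'n"
  assumes wis: "weakly_increasing_shape \<alpha>"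
    and p1: "continuous_on {0..1} \<beta>1" and p2: "continuous_on {0..1} \<beta>2"
    and m1: "\<forall>t\<in>{0..1}. Mult (\<beta>1 t) = \<alpha> t" and m2: "\<forall>t\<in>{0..1}. Mult (\<beta>2 t) = \<alpha> t"
    and tau: "\<tau> \<in> {0..1}" and eq: "\<beta>1 \<tau> = \<beta>2 \<tau>"
  shows "\<exists>\<eta>>0. \<forall>t\<in>{0..1}. \<tau> \<le> t \<and> t < \<tau> + \<eta> \<longrightarrow> \<beta>1 t = \<beta>2 t"
proof -
  define y where "y = \<beta>1 \<tau>"
  define V where "V = range (\<lambda>i. y $ i)"
  have fV: "finite V" unfolding V_def by simp
  define R where "R = (\<lambda>(u, v). dist u v) ` {p \<in> V \<times> V. fst p \<noteq> snd p}"
  define r where "r = Min (insert 1 R)"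
  have fR: "finite R" unfolding R_def using fV by simp
  have rpos: "r > 0" unfolding r_def using fR by (subst Min_gr_iff) (auto simp: R_def)
  have sep: "r \<le> dist u v" if "u \<in> V" "v \<in> V" "u \<noteq> v" for u v
  proof -
    have "dist u v \<in> R" unfolding R_def using that by force
    then show ?thesis unfolding r_def using fR by (intro Min_le) auto
  qed
  have r3: "r/3 > 0" using rpos by simp
  obtain d1 where d1: "d1 > 0" "\<forall>t\<in>{0..1}. dist t \<tau> < d1 \<longrightarrow> dist (\<beta>1 t) (\<beta>1 \<tau>) < r/3"
    using p1 tau r3 unfolding continuous_on_iff by blast
  obtain d2 where d2: "d2 > 0" "\<forall>t\<in>{0..1}. dist t \<tau> < d2 \<longrightarrow> dist (\<beta>2 t) (\<beta>2 \<tau>) < r/3"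
    using p2 tau r3 unfolding continuous_on_iff by blast
  show ?thesis
  proof (rule exI[of _ "min d1 d2"], intro conjI ballI impI)
    fix t assume t: "t \<in> {0..1}" and tt: "\<tau> \<le> t \<and> t < \<tau> + min d1 d2"
    have dt: "dist t \<tau> < d1" "dist t \<tau> < d2" using tt unfolding dist_real_def by auto
    have c1: "dist (\<beta>1 t $ i) (y $ i) < r/3" for i
      using d1(2) t dt(1) dist_vec_nth_le[of "\<beta>1 t" i "\<beta>1 \<tau>"] unfolding y_def by force
    have c2: "dist (\<beta>2 t $ i) (y $ i) < r/3" for i
      using d2(2) t dt(2) dist_vec_nth_le[of "\<beta>2 t" i "\<beta>2 \<tau>"] unfolding y_def eq by force
    define W where "W = set_mset (\<alpha> t)"
    have W1: "W = range (\<lambda>i. \<beta>1 t $ i)" unfolding W_def using m1 t set_Mult by metis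
    have W2: "W = range (\<lambda>i. \<beta>2 t $ i)" unfolding W_def using m2 t set_Mult by metis
    have "set_mset (\<alpha> \<tau>) = V" unfolding V_def y_def using m1 tau set_Mult by metis
    moreover have "partition_le (Shape (\<alpha> \<tau>)) (Shape (\<alpha> t))"
      using wis tau t tt unfolding weakly_increasing_shape_def by auto
    ultimately have cardW: "card W \<le> card V" unfolding W_def using shape_card by metis
    define g where "g = (\<lambda>w. SOME c. c \<in> V \<and> dist w c < r/3)"
    have guniq: "c = c'" if "c \<in> V" "c' \<in> V" "dist w c < r/3" "dist w c' < r/3" for w c c'
    proof (rule ccontr)
      assume "c \<noteq> c'"
      then have "r \<le> dist c c'" using sep that by blast
      moreover have "dist c c' \<le> dist w c + dist w c'" by (rule dist_triangle3)
      ultimately show False using that rpos by linarith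
    qed
    have gval: "g w = y $ i" if "dist w (y $ i) < r/3" for w i
    proof -
      have yi: "y $ i \<in> V" unfolding V_def by simp
      then have "\<exists>c. c \<in> V \<and> dist w c < r/3" using that by blast
      then have "g w \<in> V \<and> dist w (g w) < r/3" unfolding g_def by (rule someI_ex)
      then show ?thesis using guniq yi that by blast
    qed
    have g1: "g (\<beta>1 t $ i) = y $ i" for i using gval c1 by blast
    have g2: "g (\<beta>2 t $ i) = y $ i" for i using gval c2 by blast
    have gW: "g ` W = V" unfolding W1 V_def using g1 by (auto simp: image_iff)
    have fW: "finite W" unfolding W_def by simp
    have "card (g ` W) \<le> card W" using fW by (rule card_image_le)
    then have "card (g ` W) = card W" using cardW gW by simp
    then have inj: "inj_on g W" using fW eq_card_imp_inj_on by blast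
    have "\<beta>1 t $ i = \<beta>2 t $ i" for i
    proof -
      have "\<beta>1 t $ i \<in> W" unfolding W1 by auto
      moreover have "\<beta>2 t $ i \<in> W" unfolding W2 by auto
      ultimately
      show ?thesis using inj g1 g2 unfolding inj_on_def by metis
    qed
    then show "\<beta>1 t = \<beta>2 t" by (simp add: vec_eq_iff)
  qed (use d1 d2 in auto)
qed

lemma uniq_part:
  fixes \<beta>1 \<beta>2 :: "real \<Rightarrow> complex ^ 'n"
  assumes wis: "weakly_increasing_shape \<alpha>"
    and p1: "path \<beta>1" and p2: "path \<beta>2" and s1: "\<beta>1 0 = x0" and s2: "\<beta>2 0 = x0"
    and m1: "\<forall>t\<in>{0..1}. Mult (\<beta>1 t) = \<alpha> t" and m2: "\<forall>t\<in>{0..1}. Mult (\<beta>2 t) = \<alpha> t"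
  shows "\<forall>t\<in>{0..1}. \<beta>1 t = \<beta>2 t"
proof (rule ccontr)
  assume "\<not> (\<forall>t\<in>{0..1}. \<beta>1 t = \<beta>2 t)"
  define T where "T = {t \<in> {0..1}. \<beta>1 t \<noteq> \<beta>2 t}"
  have Tne: "T \<noteq> {}" using \<open>\<not> _\<close> unfolding T_def by blast
  have bdd: "bdd_below T" unfolding T_def by (rule bdd_belowI[of _ 0]) auto
  define \<tau> where "\<tau> = Inf T"
  have c1: "continuous_on {0..1} \<beta>1" and c2: "continuous_on {0..1} \<beta>2" using p1 p2 unfolding path_def by auto
  have t0: "0 \<le> \<tau>" unfolding \<tau>_def using Tne by (rule cInf_greatest) (auto simp: T_def)
  obtain t1 where t1: "t1 \<in> T" using Tne by blast
  have t1': "\<tau> \<le> t1" unfolding \<tau>_def using t1 bdd by (rule cInf_lower)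
  have tau1: "\<tau> \<le> 1" using t1 t1' unfolding T_def by auto
  have below: "\<beta>1 t = \<beta>2 t" if "0 \<le> t" "t < \<tau>" for t
  proof (rule ccontr)
    assume "\<beta>1 t \<noteq> \<beta>2 t"
    then have "t \<in> T" using that tau1 unfolding T_def by auto
    then have "\<tau> \<le> t" unfolding \<tau>_def using bdd by (rule cInf_lower)
    then show False using that by simp
  qed
  have eqtau: "\<beta>1 \<tau> = \<beta>2 \<tau>"
  proof (cases "\<tau> = 0")
    case True then show ?thesis using s1 s2 by simp
  next
    case False
    then have tp: "\<tau> > 0" using t0 by simp
    show ?thesis
    proof (rule ccontr)
      assume ne: "\<beta>1 \<tau> \<noteq> \<beta>2 \<tau>"
      define e where "e = dist (\<beta>1 \<tau>) (\<beta>2 \<tau>) / 2"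
      have e: "e > 0" using ne unfolding e_def by simp
      have taus: "\<tau> \<in> {0..1}" using t0 tau1 by simp
      obtain da where da: "da > 0" "\<forall>t\<in>{0..1}. dist t \<tau> < da \<longrightarrow> dist (\<beta>1 t) (\<beta>1 \<tau>) < e"
        using c1 taus e unfolding continuous_on_iff by blast
      obtain db where db: "db > 0" "\<forall>t\<in>{0..1}. dist t \<tau> < db \<longrightarrow> dist (\<beta>2 t) (\<beta>2 \<tau>) < e"
        using c2 taus e unfolding continuous_on_iff by blast
      define t where "t = max 0 (\<tau> - min da db / 2)"
      have tt: "t \<in> {0..1}" "t < \<tau>" "0 \<le> t" "dist t \<tau> < da" "dist t \<tau> < db"
        unfolding t_def dist_real_def using tp tau1 da(1) db(1) by auto
      have "\<beta>1 t = \<beta>2 t" using below tt by simp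
      moreover have "dist (\<beta>1 \<tau>) (\<beta>2 \<tau>) \<le> dist (\<beta>1 t) (\<beta>1 \<tau>) + dist (\<beta>2 t) (\<beta>2 \<tau>)"
        using dist_triangle3[of "\<beta>1 \<tau>" "\<beta>2 \<tau>" "\<beta>1 t"] \<open>\<beta>1 t = \<beta>2 t\<close> by (simp add: dist_commute)
      ultimately show False using da db tt unfolding e_def by force
    qed
  qed
  have taus: "\<tau> \<in> {0..1}" using t0 tau1 by simp
  obtain \<eta> where \<eta>: "\<eta> > 0" "\<forall>t\<in>{0..1}. \<tau> \<le> t \<and> t < \<tau> + \<eta> \<longrightarrow> \<beta>1 t = \<beta>2 t"
    using loc_uniq[OF wis c1 c2 m1 m2 taus eqtau] by blast
  have "Inf T < \<tau> + \<eta>" using \<eta>(1) unfolding \<tau>_def by simp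
  then obtain t where t: "t \<in> T" "t < \<tau> + \<eta>" using cInf_less_iff[of T] Tne bdd by blast
  have "\<tau> \<le> t" unfolding \<tau>_def using t(1) bdd by (rule cInf_lower)
  then have "\<beta>1 t = \<beta>2 t" using \<eta>(2) t unfolding T_def by auto
  then show False using t(1) unfolding T_def by simp
qed

theorem theorem8p3:
  fixes \<alpha> :: "real \<Rightarrow> complex multiset" and x0 :: "complex ^ 'n"
  assumes "continuous_map (top_of_set {0..1}) (Mult_top TYPE('n)) \<alpha>"
    and "Mult x0 = \<alpha> 0"
  shows "(\<exists>\<beta> :: real \<Rightarrow> complex ^ 'n. path \<beta> \<and> \<beta> 0 = x0 \<and> (\<forall>t\<in>{0..1}. Mult (\<beta> t) = \<alpha> t))
     \<and> (weakly_increasing_shape \<alpha> \<longrightarrow>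
          (\<forall>\<beta>1 \<beta>2 :: real \<Rightarrow> complex ^ 'n.
             path \<beta>1 \<and> \<beta>1 0 = x0 \<and> (\<forall>t\<in>{0..1}. Mult (\<beta>1 t) = \<alpha> t) \<and>
             path \<beta>2 \<and> \<beta>2 0 = x0 \<and> (\<forall>t\<in>{0..1}. Mult (\<beta>2 t) = \<alpha> t)
             \<longrightarrow> (\<forall>t\<in>{0..1}. \<beta>1 t = \<beta>2 t)))"
  using exist_part[OF assms] uniq_part by blast

end
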